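(* Let $(S,H)$ be a polarized K3 surface with $H^2=2d$, let $U\in D^b(S)$ be a spherical object with Mukai vector $(a,bH,c)$ for integers $a>0$, $b$, $c$, and let $\tau_U$ be the Hodge isometry of $\widetilde H(S,\mathbb Z)$ induced by the autoequivalence $\mathsf T_U\circ\mathsf T_{\mathcal O_S}\circ(-\otimes\mathcal O_S(H))$. Then $\tau_U^2=\mathrm{id}$ if and only if $d=5$ and $(a,b,c)$ belongs to the set $$\{(F_n+F_{n-2},-F_n,F_{n+2}+F_n),\ (F_{n+2}+F_n,-F_n,F_n+F_{n-2})\ :\ n\ge0\text{ even}\},$$ where $(F_n)_{n\in\mathbb Z}$ is defined by $F_n=1$ for $n\le1$ and $F_{n+2}=F_{n+1}+F_n$ for $n\ge0$.
   Context: An object $U\in D^b(S)$ is spherical if $\mathrm{Ext}^*(U,U)\cong H^*(S^2,\mathbb C)$; $\mathsf T_U$ is the spherical twist $F\mapsto\mathrm{Cone}(\mathrm{RHom}(U,F)\otimes U\to F)$. The Mukai vector is $v(E)=(\mathrm{rk}E,c_1(E),\mathrm{rk}E+c_1(E)^2/2-c_2(E))\in\widetilde H(S,\mathbb Z)$, and autoequivalences act on $\widetilde H(S,\mathbb Z)$ via their cohomological Fourier–Mukai transforms (Hodge isometries for the Mukai pairing). *)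

theory Defs
  imports Main
begin

text \<open>Model of the relevant part of the Mukai lattice of a polarized K3 surface (S,H), H^2 = 2d.
  A triple (r,s,t) stands for the Mukai vector (r, sH, t). The Mukai pairing is
  <(r,D,t),(r',D',t')> = D.D' - r t' - r' t.\<close>

type_synonym mvec = "int \<times> int \<times> int"

fun mukai_pair :: "int \<Rightarrow> mvec \<Rightarrow> mvec \<Rightarrow> int" where
  "mukai_pair d (r, s, t) (r', s', t') = 2 * d * s * s' - r * t' - r' * t"

fun madd :: "mvec \<Rightarrow> mvec \<Rightarrow> mvec" where
  "madd (r, s, t) (r', s', t') = (r + r', s + s', t + t')"

fun mscale :: "int \<Rightarrow> mvec \<Rightarrow> mvec" where
  "mscale k (r, s, t) = (k * r, k * s, k * t)"

text \<open>Cohomological action of the spherical twist T_U, v = v(U):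
  x \<mapsto> x - \<chi>(U,F) v = x + <v,x> v.\<close>
definition twist_action :: "int \<Rightarrow> mvec \<Rightarrow> mvec \<Rightarrow> mvec" where
  "twist_action d v x = madd x (mscale (mukai_pair d v x) v)"

text \<open>Cohomological action of (- \<otimes> O_S(H)): multiplication by exp(H) = (1, H, d).\<close>
fun tensor_H_action :: "int \<Rightarrow> mvec \<Rightarrow> mvec" where
  "tensor_H_action d (r, s, t) = (r, s + r, t + 2 * d * s + d * r)"

text \<open>tau_U: action of T_U \<circ> T_{O_S} \<circ> (- \<otimes> O_S(H)); v(O_S) = (1,0,1).\<close>
definition tau :: "int \<Rightarrow> mvec \<Rightarrow> mvec \<Rightarrow> mvec" where
  "tau d v x = twist_action d v (twist_action d (1, 0, 1) (tensor_H_action d x))"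

fun Fnat :: "nat \<Rightarrow> int" where
  "Fnat 0 = 1"
| "Fnat (Suc 0) = 1"
| "Fnat (Suc (Suc n)) = Fnat (Suc n) + Fnat n"

definition Fib :: "int \<Rightarrow> int" where
  "Fib n = (if n \<le> 1 then 1 else Fnat (nat n))"

definition fib_set :: "mvec set" where
  "fib_set = {(Fib n + Fib (n - 2), - Fib n, Fib (n + 2) + Fib n) | n. n \<ge> 0 \<and> even n}
           \<union> {(Fib (n + 2) + Fib n, - Fib n, Fib n + Fib (n - 2)) | n. n \<ge> 0 \<and> even n}"

end

theory Submission
  imports Defs
begin

lemma base_case:
  fixes a B d :: int
  assumes d: "d > 0" and B: "B > 0" and a: "a > 0"
    and eq: "a^2 - d*a*B + d*B^2 + 1 = 0"
    and le1: "a \<le> d*B - a" and le2: "B \<le> a - B"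
  shows "d = 5 \<and> a = 2 \<and> B = 1"
proof -
  have h1: "a*(d*B - a) = d*B^2 + 1" using eq by (simp add: algebra_simps power2_eq_square)
  have h2: "d*B*(a - B) = a^2 + 1" using eq by (simp add: algebra_simps power2_eq_square)
  have "a*a \<le> a*(d*B - a)" using le1 a by (simp add: mult_left_mono)
  hence h3: "a^2 \<le> d*B^2 + 1" using h1 by (simp add: power2_eq_square)
  have "d*B*B \<le> d*B*(a - B)" using le2 d B by (simp add: mult_left_mono)
  hence h4: "d*B^2 \<le> a^2 + 1" using h2 by (simp add: power2_eq_square)
  define k where "k = a^2 - d*B^2"
  have "k = -1 \<or> k = 0 \<or> k = 1" using h3 h4 unfolding k_def by linarith
  moreover have "a^2 \<ge> 4*B^2"
  proof -
    have "2*B \<le> a" using le2 by simp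
    hence "(2*B)^2 \<le> a^2" using B by (intro power_mono) auto
    thus ?thesis by (simp add: power2_eq_square)
  qed
  moreover have h5: "d*(B*(a - 2*B)) = k + 1" using h2 unfolding k_def by (simp add: algebra_simps power2_eq_square)
  moreover have "B*(a-2*B) \<ge> 0" using le2 B by simp
  ultimately show ?thesis
  proof (elim disjE)
    assume k: "k = -1"
    hence "d*(B*(a - 2*B)) = 0" using h5 by simp
    hence "a = 2*B" using d B by simp
    hence "(d - 4)*B^2 = 1" using k unfolding k_def by (simp add: algebra_simps power2_eq_square)
    hence "(d - 4 = 1 \<and> B^2 = 1) \<or> (d - 4 = -1 \<and> B^2 = -1)" by (simp only: zmult_eq_1_iff)
    hence "d - 4 = 1 \<and> B^2 = 1" using zero_le_power2[of B] by linarith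
    moreover hence "B = 1" using B by (auto simp add: power2_eq_1_iff)
    ultimately show ?thesis using \<open>a = 2*B\<close> by simp
  next
    assume k: "k = 0"
    hence "d*(B*(a - 2*B)) = 1" using h5 by simp
    hence "(d = 1 \<and> B*(a-2*B) = 1) \<or> (d = -1 \<and> B*(a-2*B) = -1)" by (simp only: zmult_eq_1_iff)
    hence "B*(a-2*B) = 1" using d by linarith
    hence "(B = 1 \<and> a-2*B = 1) \<or> (B = -1 \<and> a-2*B = -1)" by (simp only: zmult_eq_1_iff)
    hence "B = 1" "a = 3" using B by linarith+
    hence "a^2 - d*B^2 = 9 - d" by simp
    moreover have "d = 1" using \<open>d*(B*(a - 2*B)) = 1\<close> \<open>B*(a-2*B) = 1\<close> by simp
    ultimately show ?thesis using k unfolding k_def by simp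
  next
    assume k: "k = 1"
    hence x: "d*(B*(a - 2*B)) = 2" using h5 by simp
    have "a^2 = d*B^2 + 1" using k unfolding k_def by simp
    hence y: "4*B^2 \<le> d*B^2 + 1" using \<open>a^2 \<ge> 4*B^2\<close> by simp
    have B1: "B^2 \<ge> 1" using B by (simp add: one_le_power)
    have "d \<ge> 3"
    proof (rule ccontr)
      assume "\<not> d \<ge> 3"
      hence "d*B^2 \<le> 2*B^2" using zero_le_power2[of B] by (intro mult_right_mono) auto
      thus False using y B1 by linarith
    qed
    have "B*(a-2*B) \<noteq> 0" using x by auto
    hence X: "B*(a-2*B) \<ge> 1" using \<open>B*(a-2*B) \<ge> 0\<close> by linarith
    have "d*1 \<le> d*(B*(a - 2*B))" using X d by (intro mult_left_mono) auto
    thus ?thesis using x \<open>d \<ge> 3\<close> by simp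
  qed
qed

definition yy :: "nat \<Rightarrow> int" where "yy j = Fib (2 * int j - 2)"

lemma Fnat_rec4: "Fnat (n + 4) = 3 * Fnat (n + 2) - Fnat n"
proof -
  have "Fnat (n+4) = Fnat (n+3) + Fnat (n+2)" by (simp add: numeral_eq_Suc)
  moreover have "Fnat (n+3) = Fnat (n+2) + Fnat (n+1)" by (simp add: numeral_eq_Suc)
  moreover have "Fnat (n+2) = Fnat (n+1) + Fnat n" by (simp add: numeral_eq_Suc)
  ultimately show ?thesis by simp
qed

lemma yy0: "yy 0 = 1" by (simp add: yy_def Fib_def)
lemma yy1: "yy 1 = 1" by (simp add: yy_def Fib_def)
lemma yy1': "yy (Suc 0) = 1" by (simp add: yy_def Fib_def)
lemma yy_Suc: "yy (Suc k) = Fnat (2*k)"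
proof (cases k)
  case 0 then show ?thesis by (simp add: yy_def Fib_def)
next
  case (Suc m)
  have "2 * int (Suc k) - 2 = int (2*k)" by simp
  moreover have "\<not> int (2*k) \<le> 1" using Suc by simp
  moreover have "nat (2 * int k) = 2*k" by simp
  ultimately show ?thesis by (simp add: yy_def Fib_def)
qed
lemma yy_rec: "yy (Suc (Suc k)) = 3 * yy (Suc k) - yy k"
proof (cases k)
  case 0 then show ?thesis by (simp add: yy_Suc yy0 numeral_eq_Suc)
next
  case (Suc m)
  have "2 * Suc k = 2*m + 4" "2 * k = 2*m+2" using Suc by simp_all
  then show ?thesis using Fnat_rec4[of "2*m"] Suc by (simp add: yy_Suc)
qed

definition fam :: "nat \<Rightarrow> mvec" where
  "fam k = (yy k + yy (k+1), - yy (k+1), yy (k+1) + yy (k+2))"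

definition PP :: "int \<Rightarrow> int \<Rightarrow> int \<Rightarrow> bool" where
  "PP a b c \<longleftrightarrow> (\<exists>k. (a,b,c) = fam k \<or> (c,b,a) = fam k)"

lemma Fib_even:
  fixes n :: int assumes "n \<ge> 0" "even n"
  obtains k where "Fib n = yy (k+1)" "Fib (n-2) = yy k" "Fib (n+2) = yy (k+2)"
proof -
  obtain m where m: "n = 2*m" using assms by (auto elim: evenE)
  define k where "k = nat m"
  have nk: "n = 2 * int k" using m assms k_def by simp
  have "Fib n = yy (k+1)" "Fib (n-2) = yy k" "Fib (n+2) = yy (k+2)"
    unfolding yy_def nk by (simp_all add: algebra_simps)
  thus ?thesis using that by blast
qed

lemma fib_set_iff: "(a,b,c) \<in> fib_set \<longleftrightarrow> PP a b c"
proof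
  assume "(a,b,c) \<in> fib_set"
  then obtain n where n: "n \<ge> 0" "even n" and
    h: "(a,b,c) = (Fib n + Fib (n - 2), - Fib n, Fib (n + 2) + Fib n) \<or>
        (a,b,c) = (Fib (n + 2) + Fib n, - Fib n, Fib n + Fib (n - 2))"
    unfolding fib_set_def by blast
  obtain k where "Fib n = yy (k+1)" "Fib (n-2) = yy k" "Fib (n+2) = yy (k+2)"
    using Fib_even[OF n] by blast
  thus "PP a b c" using h unfolding PP_def fam_def by (auto simp: algebra_simps)
next
  assume "PP a b c"
  then obtain k where h: "(a,b,c) = fam k \<or> (c,b,a) = fam k" unfolding PP_def by blast
  define n where "n = 2 * int k"
  have n: "n \<ge> 0" "even n" unfolding n_def by simp_all
  have "Fib n = yy (k+1)" "Fib (n-2) = yy k" "Fib (n+2) = yy (k+2)"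
    unfolding yy_def n_def by (simp_all add: algebra_simps)
  thus "(a,b,c) \<in> fib_set" using h n unfolding fib_set_def fam_def
    by (auto simp: algebra_simps)
qed

lemma PP_swap: "PP a b c \<Longrightarrow> PP c b a" unfolding PP_def by blast

lemma PP_bmove:
  assumes "PP a (- B) (5*B - a)"
  shows "PP a (- (a - B)) (5*(a - B) - a)"
proof -
  obtain k where h: "(a, -B, 5*B - a) = fam k \<or> (5*B - a, -B, a) = fam k"
    using assms unfolding PP_def by blast
  then show ?thesis
  proof
    assume e: "(a, -B, 5*B - a) = fam k"
    hence a: "a = yy k + yy (k+1)" and Bv: "B = yy (k+1)" unfolding fam_def by auto
    show ?thesis
    proof (cases k)
      case 0
      have "(a, - (a - B), 5*(a - B) - a) = fam 0"
        using a Bv 0 by (simp add: fam_def yy0 yy1 yy1' yy_rec[of 0, simplified] numeral_eq_Suc)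
      thus ?thesis unfolding PP_def by blast
    next
      case (Suc m)
      have r: "yy (m+2) = 3*yy (m+1) - yy m" using yy_rec[of m] by simp
      have "(5*(a - B) - a, - (a - B), a) = fam m"
        using a Bv Suc r by (simp add: fam_def algebra_simps)
      thus ?thesis unfolding PP_def by blast
    qed
  next
    assume e: "(5*B - a, -B, a) = fam k"
    hence a: "a = yy (k+1) + yy (k+2)" and Bv: "B = yy (k+1)" unfolding fam_def by auto
    have r: "yy (k+3) = 3*yy (k+2) - yy (k+1)" using yy_rec[of "k+1"] by (simp add: numeral_eq_Suc)
    have "(a, - (a - B), 5*(a - B) - a) = fam (k+1)"
      using a Bv r by (simp add: fam_def algebra_simps numeral_eq_Suc)
    thus ?thesis unfolding PP_def by blast
  qed
qed

lemma PP_sum: "PP a b c \<Longrightarrow> a + c + 5*b = 0"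
proof -
  assume "PP a b c"
  then obtain k where h: "(a,b,c) = fam k \<or> (c,b,a) = fam k" unfolding PP_def by blast
  have r: "yy (k+2) = 3*yy (k+1) - yy k" using yy_rec[of k] by simp
  show ?thesis using h r unfolding fam_def by auto
qed

lemma descent_aux:
  fixes d :: int
  assumes d: "d > 0"
  shows "\<forall>B a. nat B = n \<longrightarrow> B > 0 \<longrightarrow> a > 0 \<longrightarrow> a \<le> d*B - a \<longrightarrow>
           a^2 - d*a*B + d*B^2 + 1 = 0 \<longrightarrow> d = 5 \<and> PP a (-B) (d*B - a)"
proof (induction n rule: less_induct)
  case (less n)
  show ?case
  proof (intro allI impI)
    fix B a :: int
    assume n: "nat B = n" and B: "B > 0" and a: "a > 0" and le1: "a \<le> d*B - a"
      and eq: "a^2 - d*a*B + d*B^2 + 1 = 0"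
    have h2: "d*B*(a - B) = a^2 + 1" using eq by (simp add: algebra_simps power2_eq_square)
    have "a^2 + 1 > 0" by (simp add: add_nonneg_pos)
    hence "d*B*(a-B) > 0" using h2 by simp
    moreover have "d*B > 0" using d B by simp
    ultimately have aB: "a - B > 0" by (metis zero_less_mult_pos)
    show "d = 5 \<and> PP a (-B) (d*B - a)"
    proof (cases "a - B < B")
      case False
      hence "d = 5 \<and> a = 2 \<and> B = 1" using base_case[OF d B a eq le1] by simp
      thus ?thesis unfolding PP_def using yy0 yy1' yy_rec[of 0]
        by (auto simp: fam_def numeral_eq_Suc intro: exI[of _ 0])
    next
      case True
      define B' where "B' = a - B"
      have lt: "nat B' < n" using True aB n B'_def by simp
      have eq': "a^2 - d*a*B' + d*B'^2 + 1 = 0" using eq unfolding B'_def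
        by (simp add: algebra_simps power2_eq_square)
      define a2 where "a2 = d*B' - a"
      have a2pos: "a * a2 = d*B'^2 + 1" using eq' unfolding a2_def by (simp add: algebra_simps power2_eq_square)
      have "d*B'^2 + 1 > 0" using d by (simp add: add_nonneg_pos)
      hence "a * a2 > 0" using a2pos by simp
      hence a2p: "a2 > 0" using a by (metis zero_less_mult_pos)
      have eq2: "a2^2 - d*a2*B' + d*B'^2 + 1 = 0" using eq' unfolding a2_def
        by (simp add: algebra_simps power2_eq_square)
      have IH: "d = 5 \<and> PP a (-B') (d*B' - a)"
      proof (cases "a \<le> d*B' - a")
        case True
        thus ?thesis using less[OF lt] aB eq' a unfolding B'_def by auto
      next
        case False
        hence "a2 \<le> d*B' - a2" unfolding a2_def by simp
        hence "d = 5 \<and> PP a2 (-B') (d*B' - a2)" using less[OF lt] aB eq2 a2p unfolding B'_def by auto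
        moreover have "d*B' - a2 = a" unfolding a2_def by simp
        ultimately show ?thesis using PP_swap unfolding a2_def by auto
      qed
      hence d5: "d = 5" by simp
      have "PP a (- (a - B')) (5*(a - B') - a)" using PP_bmove IH d5 by simp
      moreover have "a - B' = B" unfolding B'_def by simp
      ultimately show ?thesis using d5 by simp
    qed
  qed
qed

lemma descent:
  fixes d a B :: int
  assumes d: "d > 0" and B: "B > 0" and a: "a > 0"
    and eq: "a^2 - d*a*B + d*B^2 + 1 = 0"
  shows "d = 5 \<and> PP a (-B) (d*B - a)"
proof (cases "a \<le> d*B - a")
  case True
  thus ?thesis using descent_aux[OF d] B a eq by blast
next
  case False
  define a2 where "a2 = d*B - a"
  have a2pos: "a * a2 = d*B^2 + 1" using eq unfolding a2_def by (simp add: algebra_simps power2_eq_square)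
  have "d*B^2 + 1 > 0" using d by (simp add: add_nonneg_pos)
  hence "a * a2 > 0" using a2pos by simp
  hence a2p: "a2 > 0" using a by (metis zero_less_mult_pos)
  have eq2: "a2^2 - d*a2*B + d*B^2 + 1 = 0" using eq unfolding a2_def
    by (simp add: algebra_simps power2_eq_square)
  have "a2 \<le> d*B - a2" using False unfolding a2_def by simp
  hence "d = 5 \<and> PP a2 (-B) (d*B - a2)" using descent_aux[OF d] B a2p eq2 by blast
  moreover have "d*B - a2 = a" unfolding a2_def by simp
  ultimately show ?thesis using PP_swap unfolding a2_def by auto
qed

lemma backw:
  fixes a b c d r s t :: int
  assumes "a*c = d*b^2+1" "a + c + d*b = 0"
  shows "tau d (a,b,c) (tau d (a,b,c) (r,s,t)) = (r,s,t)"
proof -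
  have c: "c = -a - d*b" using assms by simp
  have q: "a*a + a*d*b + d*b^2 + 1 = 0" using assms(1) unfolding c by (simp add: algebra_simps power2_eq_square)
  show ?thesis unfolding c tau_def twist_action_def using q
    apply (simp add: Let_def)
    apply algebra
    done
qed

lemma forw:
  fixes a b c d :: int
  assumes "a*c = d*b^2+1" "tau d (a,b,c) (tau d (a,b,c) (0,0,1)) = (0,0,1)"
  shows "b^2 * d * (a + c + d*b)^2 = 0"
  using assms unfolding tau_def twist_action_def
  apply (simp add: Let_def)
  apply algebra
  done

theorem theoremA16:
  fixes d a b c :: int
  assumes "d > 0"
    and "a > 0"
    and "mukai_pair d (a, b, c) (a, b, c) = -2"
  shows "(\<forall>x. tau d (a, b, c) (tau d (a, b, c) x) = x) \<longleftrightarrow> d = 5 \<and> (a, b, c) \<in> fib_set"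
proof -
  have ac: "a*c = d*b^2+1" using assms(3) by (simp add: power2_eq_square algebra_simps)
  show ?thesis
  proof
    assume H: "\<forall>x. tau d (a, b, c) (tau d (a, b, c) x) = x"
    have "b^2 * d * (a + c + d*b)^2 = 0" using forw[OF ac] H by blast
    hence "b = 0 \<or> a + c + d*b = 0" using assms(1) by simp
    moreover have "b \<noteq> 0"
    proof
      assume b0: "b = 0"
      hence "a*c = 1" using ac by simp
      hence c1: "a = 1" "c = 1" using assms(2) by (auto simp: zmult_eq_1_iff)
      have "tau d (a, b, c) (tau d (a, b, c) (1,0,0)) = (1,0,0)" using H by blast
      thus False using b0 c1 unfolding tau_def twist_action_def by simp
    qed
    ultimately have s: "a + c + d*b = 0" by simp
    have "b < 0"
    proof (rule ccontr)
      assume "\<not> b < 0"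
      hence "b > 0" using \<open>b \<noteq> 0\<close> by simp
      hence "c < 0" using s assms(1,2) by (smt (verit) mult_pos_pos)
      hence "a*c < 0" using assms(2) by (simp add: mult_pos_neg)
      moreover have "d*b^2 + 1 > 0" using assms(1) by (simp add: add_nonneg_pos)
      ultimately show False using ac by simp
    qed
    define B where "B = -b"
    have Bp: "B > 0" using \<open>b < 0\<close> B_def by simp
    have cB: "c = d*B - a" using s B_def by simp
    have eq: "a^2 - d*a*B + d*B^2 + 1 = 0" using ac unfolding cB B_def
      by (simp add: algebra_simps power2_eq_square)
    have "d = 5 \<and> PP a (-B) (d*B - a)" using descent[OF assms(1) Bp assms(2) eq] .
    moreover have "-B = b" "d*B - a = c" using cB B_def by simp_all
    ultimately show "d = 5 \<and> (a, b, c) \<in> fib_set" using fib_set_iff by metis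
  next
    assume "d = 5 \<and> (a, b, c) \<in> fib_set"
    hence "d = 5" "PP a b c" using fib_set_iff by auto
    hence s: "a + c + d*b = 0" using PP_sum by simp
    show "\<forall>x. tau d (a, b, c) (tau d (a, b, c) x) = x"
    proof
      fix x :: mvec
      obtain r s t where "x = (r,s,t)" by (cases x) auto
      thus "tau d (a, b, c) (tau d (a, b, c) x) = x" using backw[OF ac s] by simp
    qed
  qed
qed

end
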